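(* Let $h>0$ satisfy $L_eh^2\le1/9$, where $L_e=L+2\epsilon\tilde L$. For $x,v\in\mathbb{R}^{Nd}$ and $\mathcal U_0\sim\mathrm{Unif}[0,1]$, let $Q_h(x,v)=x+hv-\frac{h^2}2\nabla U(x+h\mathcal U_0v)$ and $P_h(x,v)=v-h\nabla U(x+h\mathcal U_0v)$ (one step of the randomized integrator). Then $$\sum_{\ell=1}^N\big|\!\big|\!\big|\mathbb{E}[(Q^\ell_h(x,v),P^\ell_h(x,v))]-(q^\ell_h(x,v),p^\ell_h(x,v))\big|\!\big|\!\big|^2\le7(L_eh^2)^3\sum_{\ell=1}^N\Big(|\!|\!|(x^\ell,v^\ell)|\!|\!|^2+\frac13L_e^{-2}\epsilon^2\mathbf W_0^2\Big),$$ where $\mathbf W_0=|\nabla_1W(0,0)|$.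
   Context: Standing assumptions: $\epsilon\ge0$; $V:\mathbb{R}^d\to\mathbb{R}$, $W:\mathbb{R}^d\times\mathbb{R}^d\to\mathbb{R}$ are $C^1$, $\nabla_1W$ the gradient in the first argument, constants $L>0$, $\tilde L\ge0$ with: (a) $V(0)=0$, $V\ge0$; (b) $|\nabla V(x)-\nabla V(y)|\le L|x-y|$; (d) $W$ symmetric, $|\nabla_1W(x,y)-\nabla_1W(\tilde x,\tilde y)|\le\tilde L(|x-\tilde x|+|y-\tilde y|)$. Points of $\mathbb{R}^{Nd}$: $x=(x^1,\dots,x^N)$. $U(x)=\sum_i\big(V(x^i)+\frac\epsilon{2N}\sum_jW(x^i,x^j)\big)$, $\nabla U=(\nabla_1U,\dots,\nabla_NU)$ with $\nabla_iU=\partial U/\partial x^i$. Exact flow $(q_t,p_t)(x,v)$: $\dot q^i_t=p^i_t$, $\dot p^i_t=-\nabla_iU(q_t)$, $(q_0,p_0)=(x,v)$. For $(a,b)\in\mathbb{R}^{2d}$, $|\!|\!|(a,b)|\!|\!|^2=|a|^2+L_e^{-1}|b|^2$. *)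

theory Defs
  imports "HOL-Analysis.Analysis"
begin

text \<open>Configurations of N particles in R^d: elements of 'd ^ 'n, with 'n a finite
  index type of cardinality N and 'd a Euclidean space (R^d).\<close>

definition Upot :: "('d \<Rightarrow> real) \<Rightarrow> ('d \<Rightarrow> 'd \<Rightarrow> real) \<Rightarrow> real \<Rightarrow> ('d ^ 'n::finite) \<Rightarrow> real" where
  "Upot V W eps x = (\<Sum>i\<in>UNIV. V (x $ i) + eps / (2 * real CARD('n)) * (\<Sum>j\<in>UNIV. W (x $ i) (x $ j)))"

definition tnorm2 :: "real \<Rightarrow> 'd::real_normed_vector \<Rightarrow> 'd \<Rightarrow> real" where
  "tnorm2 Le a b = (norm a)^2 + (norm b)^2 / Le"

text \<open>One step of the randomized integrator, for the realisation u of U_0.\<close>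
definition Qstep :: "(('d::real_normed_vector) ^ 'n::finite \<Rightarrow> 'd ^ 'n) \<Rightarrow> real \<Rightarrow> 'd ^ 'n \<Rightarrow> 'd ^ 'n \<Rightarrow> real \<Rightarrow> 'd ^ 'n" where
  "Qstep gU h x v u = x + h *\<^sub>R v - (h^2/2) *\<^sub>R gU (x + (h*u) *\<^sub>R v)"

definition Pstep :: "(('d::real_normed_vector) ^ 'n::finite \<Rightarrow> 'd ^ 'n) \<Rightarrow> real \<Rightarrow> 'd ^ 'n \<Rightarrow> 'd ^ 'n \<Rightarrow> real \<Rightarrow> 'd ^ 'n" where
  "Pstep gU h x v u = v - h *\<^sub>R gU (x + (h*u) *\<^sub>R v)"

end

theory Submission
  imports Defs
begin


lemma gW_cont:
  fixes gW :: "'d::euclidean_space \<Rightarrow> 'd \<Rightarrow> 'd"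
  assumes W_lip: "\<And>y z y' z'. norm (gW y z - gW y' z') \<le> Lt * (norm (y - y') + norm (z - z'))"
    and Lt: "Lt \<ge> 0"
  shows "continuous_on UNIV (\<lambda>p. gW (fst p) (snd p))"
proof (rule lipschitz_on_continuous_on[of "2*Lt"], unfold lipschitz_on_def, safe)
  show "0 \<le> 2 * Lt" using Lt by simp
  fix p r :: "'d \<times> 'd"
  have "dist (gW (fst p) (snd p)) (gW (fst r) (snd r)) \<le> Lt * (dist (fst p) (fst r) + dist (snd p) (snd r))"
    using W_lip by (simp add: dist_norm)
  also have "\<dots> \<le> Lt * (dist p r + dist p r)"
    using Lt by (meson add_mono dist_fst_le dist_snd_le mult_left_mono)
  finally show "dist (gW (fst p) (snd p)) (gW (fst r) (snd r)) \<le> 2 * Lt * dist p r" by simp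
qed

lemma W_joint:
  fixes W :: "'d::euclidean_space \<Rightarrow> 'd \<Rightarrow> real" and gW :: "'d \<Rightarrow> 'd \<Rightarrow> 'd"
  assumes W_diff: "\<And>y z. ((\<lambda>a. W a z) has_derivative (\<lambda>b. gW y z \<bullet> b)) (at y)"
    and W_sym: "\<And>y z. W y z = W z y"
    and gWc: "continuous_on UNIV (\<lambda>p. gW (fst p) (snd p))"
  shows "((\<lambda>p. W (fst p) (snd p)) has_derivative (\<lambda>t. gW a b \<bullet> fst t + gW b a \<bullet> snd t)) (at (a,b))"
proof -
  have c1: "continuous_on UNIV (\<lambda>p. blinfun_inner_left (gW (snd p) (fst p)))"
  proof -
    have "continuous_on UNIV ((\<lambda>p. gW (fst p) (snd p)) \<circ> (\<lambda>p. (snd p, fst p)))"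
      by (rule continuous_on_compose) (auto intro!: continuous_intros gWc[THEN continuous_on_subset])
    then have "continuous_on UNIV (\<lambda>p. gW (snd p) (fst p))" by (simp add: o_def)
    then show ?thesis
      by (rule continuous_on_compose[of _ _ blinfun_inner_left, unfolded o_def])
         (auto intro: linear_continuous_on bounded_linear_blinfun_inner_left)
  qed
  have fy: "((\<lambda>y. W x y) has_derivative blinfun_apply (blinfun_inner_left (gW y x))) (at y within UNIV)" for x y
  proof -
    have e: "(\<lambda>y. W x y) = (\<lambda>y. W y x)" by (rule ext, rule W_sym)
    have "((\<lambda>y. W y x) has_derivative (\<lambda>b. gW y x \<bullet> b)) (at y)" by (rule W_diff)
    then show ?thesis unfolding e by (simp add: inner_commute)
  qed
  have "((\<lambda>(x, y). W x y) has_derivative (\<lambda>(tx, ty). gW a b \<bullet> tx + blinfun_apply (blinfun_inner_left (gW b a)) ty)) (at (a, b) within UNIV \<times> UNIV)"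
    apply (rule has_derivative_partialsI[where fy="\<lambda>x y. blinfun_inner_left (gW y x)"])
    apply (rule W_diff)
    using fy apply simp
    using c1 apply (simp add: continuous_on_eq_continuous_at case_prod_unfold)
    by auto
  then show ?thesis by (simp add: case_prod_unfold inner_commute)
qed




lemma Upot_deriv:
  fixes V :: "'d::euclidean_space \<Rightarrow> real" and gV :: "'d \<Rightarrow> 'd"
    and W :: "'d \<Rightarrow> 'd \<Rightarrow> real" and gW :: "'d \<Rightarrow> 'd \<Rightarrow> 'd"
    and y :: "'d ^ 'n::finite"
  assumes V_diff: "\<And>y. (V has_derivative (\<lambda>z. gV y \<bullet> z)) (at y)"
    and WJ: "\<And>a b. ((\<lambda>p. W (fst p) (snd p)) has_derivative (\<lambda>t. gW a b \<bullet> fst t + gW b a \<bullet> snd t)) (at (a,b))"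
  shows "(Upot V W eps has_derivative (\<lambda>z. \<Sum>i\<in>UNIV. gV (y$i) \<bullet> z$i + eps / (2 * real CARD('n)) *
            (\<Sum>j\<in>UNIV. gW (y$i) (y$j) \<bullet> z$i + gW (y$j) (y$i) \<bullet> z$j))) (at y)"
proof -
  have nth: "((\<lambda>x::'d^'n. x$i) has_derivative (\<lambda>x. x$i)) (at y)" for i
    by (rule bounded_linear_imp_has_derivative) (rule bounded_linear_vec_nth)
  have dV: "((\<lambda>x. V (x$i)) has_derivative (\<lambda>z. gV (y$i) \<bullet> z$i)) (at y)" for i
    using has_derivative_compose[OF nth V_diff] .
  have dP: "((\<lambda>x::'d^'n. (x$i, x$j)) has_derivative (\<lambda>z. (z$i, z$j))) (at y)" for i j
    by (rule has_derivative_Pair[OF nth nth])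
  have dW: "((\<lambda>x. W (x$i) (x$j)) has_derivative (\<lambda>z. gW (y$i) (y$j) \<bullet> z$i + gW (y$j) (y$i) \<bullet> z$j)) (at y)" for i j
    using has_derivative_compose[OF dP[of i j] WJ[of "y$i" "y$j"]] by simp
  show ?thesis
    unfolding Upot_def[abs_def]
    by (intro has_derivative_sum has_derivative_add dV has_derivative_mult_right dW)
qed

lemma gU_formula:
  fixes V :: "'d::euclidean_space \<Rightarrow> real" and gV :: "'d \<Rightarrow> 'd"
    and W :: "'d \<Rightarrow> 'd \<Rightarrow> real" and gW :: "'d \<Rightarrow> 'd \<Rightarrow> 'd"
    and gU :: "'d ^ 'n::finite \<Rightarrow> 'd ^ 'n"
  assumes V_diff: "\<And>y. (V has_derivative (\<lambda>z. gV y \<bullet> z)) (at y)"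
    and WJ: "\<And>a b. ((\<lambda>p. W (fst p) (snd p)) has_derivative (\<lambda>t. gW a b \<bullet> fst t + gW b a \<bullet> snd t)) (at (a,b))"
    and U_grad: "\<And>y. (Upot V W eps has_derivative (\<lambda>z. gU y \<bullet> z)) (at y)"
  shows "gU y = (\<chi> k. gV (y$k) + (eps / real CARD('n)) *\<^sub>R (\<Sum>j\<in>UNIV. gW (y$k) (y$j)))"
proof -
  define F where "F = (\<chi> k. gV (y$k) + (eps / real CARD('n)) *\<^sub>R (\<Sum>j\<in>UNIV. gW (y$k) (y$j)))"
  have u: "(\<lambda>z. gU y \<bullet> z) = (\<lambda>z. \<Sum>i\<in>UNIV. gV (y$i) \<bullet> z$i + eps / (2 * real CARD('n)) *
            (\<Sum>j\<in>UNIV. gW (y$i) (y$j) \<bullet> z$i + gW (y$j) (y$i) \<bullet> z$j))"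
    by (rule has_derivative_unique[OF U_grad Upot_deriv[OF V_diff WJ]])
  have key: "gU y \<bullet> z = F \<bullet> z" for z
  proof -
    have sw: "(\<Sum>i\<in>UNIV. \<Sum>j\<in>UNIV. gW (y$j) (y$i) \<bullet> z$j) = (\<Sum>i\<in>UNIV. \<Sum>j\<in>UNIV. gW (y$i) (y$j) \<bullet> z$i)"
      by (rule sum.swap)
    have "gU y \<bullet> z = (\<Sum>i\<in>UNIV. gV (y$i) \<bullet> z$i) + eps / (2 * real CARD('n)) *
            ((\<Sum>i\<in>UNIV. \<Sum>j\<in>UNIV. gW (y$i) (y$j) \<bullet> z$i) + (\<Sum>i\<in>UNIV. \<Sum>j\<in>UNIV. gW (y$j) (y$i) \<bullet> z$j))"
      using fun_cong[OF u, of z] by (simp only: sum.distrib sum_distrib_left distrib_left)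
    also have "\<dots> = (\<Sum>i\<in>UNIV. gV (y$i) \<bullet> z$i) + eps / real CARD('n) * (\<Sum>i\<in>UNIV. \<Sum>j\<in>UNIV. gW (y$i) (y$j) \<bullet> z$i)"
      unfolding sw by simp
    also have "\<dots> = F \<bullet> z"
      unfolding F_def inner_vec_def
      by (simp add: inner_add_left inner_sum_left sum.distrib sum_distrib_left)
    finally show ?thesis .
  qed
  have "(gU y - F) \<bullet> (gU y - F) = 0"
    by (simp add: inner_diff_left inner_diff_right key inner_commute[of F "gU y"])
  then show ?thesis unfolding F_def by simp
qed




lemma norm_vec_L2: "norm (x :: 'a::real_normed_vector ^ 'n::finite) = L2_set (\<lambda>i. norm (x$i)) UNIV"
  by (simp add: norm_vec_def)

lemma sum_le_sqrt_card_L2: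
  fixes d :: "'n::finite \<Rightarrow> real"
  assumes "\<And>j. d j \<ge> 0"
  shows "(\<Sum>j\<in>UNIV. d j) \<le> sqrt (real CARD('n)) * L2_set d UNIV"
proof -
  show ?thesis using L2_set_mult_ineq[of d "\<lambda>_. 1::real" UNIV] using assms by (simp add: L2_set_constant mult.commute)
qed

lemma F_lip:
  fixes gV :: "'d::euclidean_space \<Rightarrow> 'd" and gW :: "'d \<Rightarrow> 'd \<Rightarrow> 'd"
    and y z :: "'d ^ 'n::finite"
  assumes eps: "eps \<ge> 0" and Lt: "Lt \<ge> 0" and L: "L \<ge> 0"
    and V_lip: "\<And>y z. norm (gV y - gV z) \<le> L * norm (y - z)"
    and W_lip: "\<And>y z y' z'. norm (gW y z - gW y' z') \<le> Lt * (norm (y - y') + norm (z - z'))"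
  defines "F \<equiv> (\<lambda>y::'d^'n. \<chi> k. gV (y$k) + (eps / real CARD('n)) *\<^sub>R (\<Sum>j\<in>UNIV. gW (y$k) (y$j)))"
  shows "norm (F y - F z) \<le> (L + 2 * eps * Lt) * norm (y - z)"
proof -
  define N where "N = real CARD('n)"
  have N: "N > 0" by (simp add: N_def)
  define d where "d = (\<lambda>k. norm (y$k - z$k))"
  have dnn: "d k \<ge> 0" for k by (simp add: d_def)
  define c0 where "c0 = eps * Lt / N * (\<Sum>j\<in>UNIV. d j)"
  have L2d: "L2_set d UNIV = norm (y - z)" by (simp add: norm_vec_L2 d_def)
  have comp: "norm ((F y - F z)$k) \<le> (L + eps * Lt) * d k + c0" for k
  proof -
    have "(F y - F z)$k = (gV (y$k) - gV (z$k)) + (eps / N) *\<^sub>R (\<Sum>j\<in>UNIV. gW (y$k) (y$j) - gW (z$k) (z$j))"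
      by (simp add: F_def N_def sum_subtractf scaleR_diff_right algebra_simps)
    also have "norm \<dots> \<le> norm (gV (y$k) - gV (z$k)) + (eps / N) * norm (\<Sum>j\<in>UNIV. gW (y$k) (y$j) - gW (z$k) (z$j))"
      using eps N by (metis (no_types, lifting) abs_of_nonneg divide_nonneg_nonneg less_imp_le norm_scaleR norm_triangle_ineq)
    also have "\<dots> \<le> L * d k + (eps / N) * (\<Sum>j\<in>UNIV. Lt * (d k + d j))"
    proof (intro add_mono mult_left_mono)
      show "norm (gV (y$k) - gV (z$k)) \<le> L * d k" using V_lip by (simp add: d_def)
      show "norm (\<Sum>j\<in>UNIV. gW (y$k) (y$j) - gW (z$k) (z$j)) \<le> (\<Sum>j\<in>UNIV. Lt * (d k + d j))"
        by (rule order_trans[OF norm_sum sum_mono]) (simp add: W_lip d_def)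
      show "0 \<le> eps / N" using eps N by simp
    qed
    also have "\<dots> = (L + eps * Lt) * d k + c0"
      using N by (simp add: c0_def sum.distrib sum_distrib_left sum_divide_distrib N_def algebra_simps)
    finally show ?thesis .
  qed
  have "norm (F y - F z) = L2_set (\<lambda>k. norm ((F y - F z)$k)) UNIV" by (rule norm_vec_L2)
  also have "\<dots> \<le> L2_set (\<lambda>k. (L + eps * Lt) * d k + c0) UNIV"
    by (rule L2_set_mono) (use comp in auto)
  also have "\<dots> \<le> L2_set (\<lambda>k. (L + eps * Lt) * d k) UNIV + L2_set (\<lambda>k::'n. c0) UNIV"
    by (rule L2_set_triangle_ineq[of "\<lambda>k. (L + eps * Lt) * d k" "\<lambda>k. c0"])
  also have "\<dots> = \<bar>L + eps * Lt\<bar> * norm (y - z) + sqrt N * \<bar>c0\<bar>"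
  proof -
    have "L2_set (\<lambda>k. (L + eps * Lt) * d k) UNIV = (L + eps * Lt) * L2_set d UNIV"
      by (rule L2_set_right_distrib[symmetric]) (use L eps Lt in simp)
    then show ?thesis using L eps Lt by (simp add: L2_set_constant L2d N_def)
  qed
  also have "\<bar>c0\<bar> = c0" using eps Lt N dnn by (simp add: c0_def sum_nonneg)
  also have "sqrt N * c0 \<le> eps * Lt * norm (y - z)"
  proof -
    have "sqrt N * c0 = eps * Lt * (sqrt N / N) * (\<Sum>j\<in>UNIV. d j)" by (simp add: c0_def)
    also have "\<dots> \<le> eps * Lt * (sqrt N / N) * (sqrt N * norm (y - z))"
      using sum_le_sqrt_card_L2[of d, OF dnn] eps Lt N by (intro mult_left_mono) (auto simp: L2d N_def)
    also have "\<dots> = eps * Lt * norm (y - z)" using N by (simp add: field_simps)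
    finally show ?thesis .
  qed
  finally have "norm (F y - F z) \<le> \<bar>L + eps * Lt\<bar> * norm (y - z) + eps * Lt * norm (y - z)" by simp
  then show ?thesis using L eps Lt by (simp add: algebra_simps)
qed

lemma F_growth:
  fixes gV :: "'d::euclidean_space \<Rightarrow> 'd" and gW :: "'d \<Rightarrow> 'd \<Rightarrow> 'd"
    and y :: "'d ^ 'n::finite"
  assumes eps: "eps \<ge> 0" and Lt: "Lt \<ge> 0" and L: "L \<ge> 0" and gV0: "gV 0 = 0"
    and V_lip: "\<And>y z. norm (gV y - gV z) \<le> L * norm (y - z)"
    and W_lip: "\<And>y z y' z'. norm (gW y z - gW y' z') \<le> Lt * (norm (y - y') + norm (z - z'))"
  defines "F \<equiv> (\<lambda>y::'d^'n. \<chi> k. gV (y$k) + (eps / real CARD('n)) *\<^sub>R (\<Sum>j\<in>UNIV. gW (y$k) (y$j)))"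
  shows "norm (F y) \<le> (L + 2 * eps * Lt) * norm y + eps * norm (gW 0 0) * sqrt (real CARD('n))"
proof -
  have F0: "F 0 = (\<chi> k. eps *\<^sub>R gW 0 0)" by (simp add: F_def gV0 sum_constant_scaleR)
  have nF0: "norm (F 0) = eps * norm (gW 0 0) * sqrt (real CARD('n))"
    unfolding F0 norm_vec_L2 using eps by (simp add: L2_set_constant)
  have "norm (F y) \<le> norm (F y - F 0) + norm (F 0)" using norm_triangle_sub[of "F y" "F 0"] by simp
  also have "norm (F y - F 0) \<le> (L + 2 * eps * Lt) * norm (y - 0)"
    unfolding F_def by (rule F_lip[OF eps Lt L V_lip W_lip])
  finally show ?thesis by (simp add: nF0)
qed




lemma sq2: fixes u v :: real shows "(u + v)^2 \<le> 2 * u^2 + 2 * v^2"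
proof -
  have "(u + v)^2 + (u - v)^2 = 2 * u^2 + 2 * v^2" by (simp add: power2_eq_square algebra_simps)
  moreover have "0 \<le> (u - v)^2" by simp
  ultimately show ?thesis by linarith
qed

lemma sq3: fixes u v w :: real shows "(u + v + w)^2 \<le> 3 * (u^2 + v^2 + w^2)"
proof -
  have "(u + v + w)^2 + (u - v)^2 + (v - w)^2 + (u - w)^2 = 3 * (u^2 + v^2 + w^2)"
    by (simp add: power2_eq_square algebra_simps)
  moreover have "0 \<le> (u - v)^2" "0 \<le> (v - w)^2" "0 \<le> (u - w)^2" by simp_all
  ultimately show ?thesis by linarith
qed

lemma num_ineq:
  fixes a X Y Z S P e :: real
  assumes a: "a > 0" "a \<le> 1/9" and nn: "X \<ge> 0" "Y \<ge> 0" "Z \<ge> 0" "S \<ge> 0"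
    and S: "S \<le> X + Y + Z + a * S / 2"
    and P: "P \<le> a^3 * S^2 / 36" and e: "0 \<le> e" "e \<le> a^2 * S / 24 + a * Y / 12"
  shows "e^2 + P \<le> 7 * (a^3 * X^2) + 7 * (a^2 * Y^2) + 7 * (a^3 * Z^2) / 3"
proof -
  define Q where "Q = X^2 + Y^2 + Z^2"
  have "a * S \<le> S" using mult_right_mono[of a 1 S] a nn by simp
  then have "S \<le> 2 * X + 2 * Y + 2 * Z" using S by linarith
  then have S2: "S \<le> 2 * (X + Y + Z)" by simp
  have "S^2 \<le> (2 * (X + Y + Z))^2" using S2 nn by (intro power_mono) auto
  also have "\<dots> \<le> 12 * Q"
  proof -
    have e: "(2 * (X + Y + Z))^2 = 4 * (X + Y + Z)^2" by (simp only: power_mult_distrib) simp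
    have "(X + Y + Z)^2 \<le> 3 * Q" unfolding Q_def by (rule sq3)
    then show ?thesis unfolding e by linarith
  qed
  finally have SQ: "S^2 \<le> 12 * Q" .
  have e2: "e^2 \<le> 2 * (a^2 * S / 24)^2 + 2 * (a * Y / 12)^2"
  proof -
    have "e^2 \<le> (a^2 * S / 24 + a * Y / 12)^2" using e by (intro power_mono) auto
    also have "\<dots> \<le> 2 * (a^2 * S / 24)^2 + 2 * (a * Y / 12)^2"
      by (rule sq2)
    finally show ?thesis .
  qed
  have "e^2 + P \<le> a^4 * S^2 / 288 + a^2 * Y^2 / 72 + a^3 * S^2 / 36"
    using e2 P by (simp add: power_mult_distrib power2_eq_square[of "a^2"] field_simps)
  also have "\<dots> \<le> a^3 * S^2 / 24 + a^2 * Y^2 / 72"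
  proof -
    have "a * (a^3 * S^2) \<le> (1/9) * (a^3 * S^2)" by (rule mult_right_mono) (use a in auto)
    then have "a^4 * S^2 \<le> a^3 * S^2 / 9" by (simp add: power_Suc[of a 3, symmetric] mult.assoc[symmetric])
    moreover have "0 \<le> a^3 * S^2" using a by simp
    moreover have "\<And>p4 p3 y2::real. p4 \<le> p3 / 9 \<Longrightarrow> 0 \<le> p3 \<Longrightarrow> p4 / 288 + y2 / 72 + p3 / 36 \<le> p3 / 24 + y2 / 72" by linarith
    ultimately show ?thesis by blast
  qed
  also have "\<dots> \<le> a^3 * Q / 2 + a^2 * Y^2 / 72"
    using SQ a by (simp add: mult_left_mono)
  also have "\<dots> \<le> 7 * (a^3 * X^2) + 7 * (a^2 * Y^2) + 7 * (a^3 * Z^2) / 3"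
  proof -
    have a3: "a^3 \<le> a^2" using a by (simp add: power_decreasing)
    have h1: "a^3 * Y^2 \<le> a^2 * Y^2" using a3 by (simp add: mult_right_mono)
    have h2: "0 \<le> a^3 * X^2" "0 \<le> a^3 * Z^2" "0 \<le> a^2 * Y^2" using a by auto
    have eq: "a^3 * Q = a^3 * X^2 + a^3 * Y^2 + a^3 * Z^2" by (simp add: Q_def algebra_simps)
    have G: "\<And>px py3 pz py2::real. py3 \<le> py2 \<Longrightarrow> 0 \<le> px \<Longrightarrow> 0 \<le> pz \<Longrightarrow> 0 \<le> py2 \<Longrightarrow>
        (px + py3 + pz) / 2 + py2 / 72 \<le> 7 * px + 7 * py2 + 7 * pz / 3" unfolding add_divide_distrib by linarith
    show ?thesis unfolding eq by (rule G[OF h1 h2])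
  qed
  finally show ?thesis .
qed




lemma mvt0:
  fixes f :: "real \<Rightarrow> 'a::real_normed_vector" and \<phi> \<phi>' :: "real \<Rightarrow> real"
  assumes T: "0 \<le> T"
    and f': "\<And>s. s \<in> {0..T} \<Longrightarrow> (f has_vector_derivative f' s) (at s within {0..T})"
    and phi': "\<And>s. s \<in> {0..T} \<Longrightarrow> (\<phi> has_real_derivative \<phi>' s) (at s)"
    and bnd: "\<And>s. s \<in> {0..T} \<Longrightarrow> norm (f' s) \<le> \<phi>' s"
  shows "norm (f T - f 0) \<le> \<phi> T - \<phi> 0"
proof (cases "T = 0")
  case True then show ?thesis by simp
next
  case False
  then have T0: "0 < T" using T by simp
  show ?thesis
  proof (rule differentiable_bound_general[OF T0, where f'=f' and \<phi>'=\<phi>'])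
    show "continuous_on {0..T} f"
      using f' has_vector_derivative_continuous continuous_on_eq_continuous_within by blast
    show "continuous_on {0..T} \<phi>"
      using phi' by (meson DERIV_continuous continuous_at_imp_continuous_on)
    fix s assume s: "0 < s" "s < T"
    then show "(f has_vector_derivative f' s) (at s)"
      using f'[of s] at_within_Icc_at[of 0 s T] by simp
    show "(\<phi> has_vector_derivative \<phi>' s) (at s)"
      using phi'[of s] s by (simp add: has_real_derivative_iff_has_vector_derivative)
    show "norm (f' s) \<le> \<phi>' s" using bnd s by simp
  qed
qed




lemma half_half: fixes w :: "'a::real_vector" shows "(1/2::real) *\<^sub>R w + (1/2) *\<^sub>R w = w"
proof -
  have "(1/2::real) *\<^sub>R w + (1/2) *\<^sub>R w = (1/2 + 1/2) *\<^sub>R w" by (rule scaleR_add_left[symmetric])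
  then show ?thesis by simp
qed

lemma half_half2: fixes w :: "'a::real_vector" shows "(h/2::real) *\<^sub>R w + (h/2) *\<^sub>R w = h *\<^sub>R w"
proof -
  have "(h/2::real) *\<^sub>R w + (h/2) *\<^sub>R w = (h/2 + h/2) *\<^sub>R w" by (rule scaleR_add_left[symmetric])
  then show ?thesis by simp
qed

lemma ode_bound:
  fixes G :: "'v::euclidean_space \<Rightarrow> 'v" and q p :: "real \<Rightarrow> 'v" and x v :: 'v and Le Bc h :: real
  assumes Le: "Le > 0" and Bc: "Bc \<ge> 0" and h: "h > 0" and step: "Le * h^2 \<le> 1/9"
    and Glip: "\<And>y z. norm (G y - G z) \<le> Le * norm (y - z)"
    and Ggr: "\<And>y. norm (G y) \<le> Le * norm y + Bc"
    and q0: "q 0 = x" and p0: "p 0 = v"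
    and q_ode: "\<And>t. t \<in> {0..h} \<Longrightarrow> (q has_vector_derivative p t) (at t within {0..h})"
    and p_ode: "\<And>t. t \<in> {0..h} \<Longrightarrow> (p has_vector_derivative - G (q t)) (at t within {0..h})"
  defines "A \<equiv> v - integral {0..h} (\<lambda>s. G (x + s *\<^sub>R v))"
  shows "norm (q h - (x + (h/2) *\<^sub>R (v + A)))^2 + norm (p h - A)^2 / Le
         \<le> 7 * (Le*h^2)^3 * (norm x^2 + norm v^2/Le + Bc^2/(3*Le^2))"
proof -
  have Gc: "continuous_on UNIV G"
    by (rule lipschitz_on_continuous_on[of Le]) (use Le Glip in \<open>auto simp: lipschitz_on_def dist_norm\<close>)
  define g where "g = (\<lambda>s. G (x + s *\<^sub>R v))"
  have gc: "continuous_on S g" for S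
    unfolding g_def by (intro continuous_on_compose2[OF Gc] continuous_intros) auto
  have qc: "continuous_on {0..h} q"
    using q_ode has_vector_derivative_continuous continuous_on_eq_continuous_within by blast
  have "\<exists>tm\<in>{0..h}. \<forall>t\<in>{0..h}. norm (q t) \<le> norm (q tm)"
    using h by (intro continuous_attains_sup continuous_on_norm qc) auto
  then obtain tm where tm: "tm \<in> {0..h}" "\<And>t. t \<in> {0..h} \<Longrightarrow> norm (q t) \<le> norm (q tm)" by blast
  define M where "M = norm (q tm)"
  define Gm where "Gm = Le * M + Bc"
  have hG: "norm (G (q t)) \<le> Gm" if "t \<in> {0..h}" for t
  proof -
    have "Le * norm (q t) \<le> Le * M" using tm(2)[OF that] Le by (simp add: M_def)
    then show ?thesis using Ggr[of "q t"] by (simp add: Gm_def)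
  qed
  have Gm0: "Gm \<ge> 0" using Le Bc by (simp add: Gm_def M_def)
  have sv: "((\<lambda>s. s *\<^sub>R w) has_vector_derivative w) F" for w :: 'v and F
    unfolding has_vector_derivative_def by (rule bounded_linear_imp_has_derivative) (rule bounded_linear_scaleR_left)
  have pb: "norm (p t - v) \<le> t * Gm" if t: "t \<in> {0..h}" for t
  proof -
    have "norm (p t - p 0) \<le> t * Gm - 0 * Gm"
    proof (rule mvt0[where f'="\<lambda>s. - G (q s)" and \<phi>'="\<lambda>s. Gm"])
      show "0 \<le> t" using t by simp
      fix s assume s: "s \<in> {0..t}"
      then have sh: "s \<in> {0..h}" using t by auto
      show "(p has_vector_derivative - G (q s)) (at s within {0..t})"
        by (rule has_vector_derivative_within_subset[OF p_ode[OF sh]]) (use t in auto)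
      show "((\<lambda>s. s * Gm) has_real_derivative Gm) (at s)" by (auto intro!: derivative_eq_intros)
      show "norm (- G (q s)) \<le> Gm" using hG[OF sh] by simp
    qed
    then show ?thesis using p0 by simp
  qed
  have qb: "norm (q t - x - t *\<^sub>R v) \<le> t^2 / 2 * Gm" if t: "t \<in> {0..h}" for t
  proof -
    have "norm ((q t - x - t *\<^sub>R v) - (q 0 - x - 0 *\<^sub>R v)) \<le> t^2/2 * Gm - 0^2/2 * Gm"
    proof (rule mvt0[where f="\<lambda>s. q s - x - s *\<^sub>R v" and f'="\<lambda>s. p s - v" and \<phi>'="\<lambda>s. s * Gm"])
      show "0 \<le> t" using t by simp
      fix s assume s: "s \<in> {0..t}"
      then have sh: "s \<in> {0..h}" using t by auto
      have qd: "(q has_vector_derivative p s) (at s within {0..t})"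
        by (rule has_vector_derivative_within_subset[OF q_ode[OF sh]]) (use t in auto)
      show "((\<lambda>s. q s - x - s *\<^sub>R v) has_vector_derivative p s - v) (at s within {0..t})"
        using has_vector_derivative_diff[OF has_vector_derivative_diff[OF qd has_vector_derivative_const] sv] by simp
      show "((\<lambda>s. s^2/2 * Gm) has_real_derivative s * Gm) (at s)" by (auto intro!: derivative_eq_intros)
      show "norm (p s - v) \<le> s * Gm" using pb[OF sh] .
    qed
    then show ?thesis using q0 by simp
  qed
  have Mb: "M \<le> norm x + h * norm v + h^2/2 * Gm"
  proof -
    have "M \<le> norm x + norm (tm *\<^sub>R v) + norm (q tm - x - tm *\<^sub>R v)"
    proof -
      have t1: "norm (q tm) \<le> norm (x + tm *\<^sub>R v) + norm (q tm - x - tm *\<^sub>R v)"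
        using norm_triangle_ineq[of "x + tm *\<^sub>R v" "q tm - x - tm *\<^sub>R v"] by simp
      have t2: "norm (x + tm *\<^sub>R v) \<le> norm x + norm (tm *\<^sub>R v)" by (rule norm_triangle_ineq)
      show ?thesis using t1 t2 unfolding M_def by linarith
    qed
    also have "\<dots> \<le> norm x + h * norm v + h^2/2 * Gm"
    proof -
      have "tm * norm v \<le> h * norm v" using tm(1) by (intro mult_right_mono) auto
      moreover have "tm^2/2 * Gm \<le> h^2/2 * Gm" using tm(1) Gm0 by (intro mult_right_mono divide_right_mono power_mono) auto
      ultimately show ?thesis using qb[OF tm(1)] tm(1) by simp
    qed
    finally show ?thesis .
  qed
  have Id: "((\<lambda>t. integral {0..t} g) has_vector_derivative g s) (at s within {0..T})" if "s \<in> {0..T}" for s T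
    by (rule integral_has_vector_derivative[OF gc that])
  define D where "D = (\<lambda>t. p t - (v - integral {0..t} g))"
  have Db: "norm (D t) \<le> Le * Gm * t^3 / 6" if t: "t \<in> {0..h}" for t
  proof -
    have "norm (D t - D 0) \<le> Le * Gm * t^3 / 6 - Le * Gm * 0^3 / 6"
    proof (rule mvt0[where f'="\<lambda>s. - G (q s) - (0 - g s)" and \<phi>'="\<lambda>s. Le * Gm * s^2 / 2"])
      show "0 \<le> t" using t by simp
      fix s assume s: "s \<in> {0..t}"
      then have sh: "s \<in> {0..h}" using t by auto
      have pd: "(p has_vector_derivative - G (q s)) (at s within {0..t})"
        by (rule has_vector_derivative_within_subset[OF p_ode[OF sh]]) (use t in auto)
      show "(D has_vector_derivative - G (q s) - (0 - g s)) (at s within {0..t})"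
        unfolding D_def by (intro has_vector_derivative_diff pd has_vector_derivative_const Id s)
      show "((\<lambda>s. Le * Gm * s^3 / 6) has_real_derivative Le * Gm * s^2 / 2) (at s)"
        by (auto intro!: derivative_eq_intros)
      have "norm (- G (q s) - (0 - g s)) = norm (G (x + s *\<^sub>R v) - G (q s))" by (simp add: g_def norm_minus_commute)
      also have "\<dots> \<le> Le * norm (x + s *\<^sub>R v - q s)" by (rule Glip)
      also have "\<dots> = Le * norm (q s - x - s *\<^sub>R v)" by (simp add: norm_minus_commute algebra_simps)
      also have "\<dots> \<le> Le * (s^2 / 2 * Gm)" using qb[OF sh] Le by (intro mult_left_mono) auto
      finally show "norm (- G (q s) - (0 - g s)) \<le> Le * Gm * s^2 / 2" by (simp add: algebra_simps)
    qed
    then show ?thesis using p0 by (simp add: D_def)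
  qed
  have psib: "norm (t *\<^sub>R g t - integral {0..t} g) \<le> Le * norm v * t^2 / 2" if t: "t \<in> {0..h}" for t
  proof -
    have "norm ((t *\<^sub>R g t - integral {0..t} g) - (0 *\<^sub>R g t - integral {0..0} g))
          \<le> Le * norm v * (t * t - t^2/2) - Le * norm v * (t * 0 - 0^2/2)"
    proof (rule mvt0[where f="\<lambda>r. r *\<^sub>R g t - integral {0..r} g" and f'="\<lambda>r. g t - g r"
                     and \<phi>="\<lambda>r. Le * norm v * (t * r - r^2/2)" and \<phi>'="\<lambda>r. Le * norm v * (t - r)"])
      show "0 \<le> t" using t by simp
      fix s assume s: "s \<in> {0..t}"
      show "((\<lambda>r. r *\<^sub>R g t - integral {0..r} g) has_vector_derivative g t - g s) (at s within {0..t})"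
        by (intro has_vector_derivative_diff sv Id s)
      show "((\<lambda>r. Le * norm v * (t * r - r^2/2)) has_real_derivative Le * norm v * (t - s)) (at s)"
        by (auto intro!: derivative_eq_intros)
      have "norm (g t - g s) \<le> Le * norm ((x + t *\<^sub>R v) - (x + s *\<^sub>R v))" unfolding g_def by (rule Glip)
      also have "norm ((x + t *\<^sub>R v) - (x + s *\<^sub>R v)) = (t - s) * norm v"
        using s by (simp add: scaleR_diff_left[symmetric])
      finally show "norm (g t - g s) \<le> Le * norm v * (t - s)" by (simp add: algebra_simps)
    qed
    then show ?thesis by (simp add: power2_eq_square)
  qed
  define I where "I = (\<lambda>t. integral {0..t} g)"
  define E where "E = (\<lambda>t. q t - x - (t/2) *\<^sub>R (v + (v - I t)))"
  have Eb: "norm (E h) \<le> Le * Gm * h^4 / 24 + Le * norm v * h^3 / 12"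
  proof -
    have "norm (E h - E 0) \<le> (Le * Gm * h^4 / 24 + Le * norm v * h^3 / 12) - (Le * Gm * 0^4 / 24 + Le * norm v * 0^3 / 12)"
    proof (rule mvt0[where f'="\<lambda>s. p s - (1/2) *\<^sub>R (v + (v - I s)) + (s/2) *\<^sub>R g s"
                     and \<phi>'="\<lambda>s. Le * Gm * s^3 / 6 + Le * norm v * s^2 / 4"])
      show "0 \<le> h" using h by simp
      fix s assume sh: "s \<in> {0..h}"
      have ds: "((\<lambda>t. t/2) has_real_derivative 1/2) (at s within {0..h})" by (auto intro!: derivative_eq_intros)
      have dA: "((\<lambda>t. v + (v - I t)) has_vector_derivative 0 + (0 - g s)) (at s within {0..h})"
        unfolding I_def by (intro has_vector_derivative_add has_vector_derivative_diff has_vector_derivative_const Id sh)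
      show "(E has_vector_derivative p s - (1/2) *\<^sub>R (v + (v - I s)) + (s/2) *\<^sub>R g s) (at s within {0..h})"
      proof -
        have dE: "((\<lambda>t. (t/2) *\<^sub>R (v + (v - I t))) has_vector_derivative (s/2) *\<^sub>R (0 + (0 - g s)) + (1/2) *\<^sub>R (v + (v - I s))) (at s within {0..h})"
          by (rule has_vector_derivative_scaleR[OF ds dA])
        show ?thesis unfolding E_def
          by (rule has_vector_derivative_eq_rhs[OF has_vector_derivative_diff[OF has_vector_derivative_diff[OF q_ode[OF sh] has_vector_derivative_const] dE]])
             (simp add: algebra_simps)
      qed
      show "((\<lambda>s. Le * Gm * s^4 / 24 + Le * norm v * s^3 / 12) has_real_derivative Le * Gm * s^3 / 6 + Le * norm v * s^2 / 4) (at s)"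
        by (auto intro!: derivative_eq_intros simp: algebra_simps)
      have eq: "p s - (1/2) *\<^sub>R (v + (v - I s)) + (s/2) *\<^sub>R g s = D s + (1/2) *\<^sub>R (s *\<^sub>R g s - I s)"
        by (simp add: D_def I_def algebra_simps half_half)
      have "norm (D s + (1/2) *\<^sub>R (s *\<^sub>R g s - I s)) \<le> norm (D s) + (1/2) * norm (s *\<^sub>R g s - I s)"
        by (rule order_trans[OF norm_triangle_ineq]) simp
      also have "\<dots> \<le> Le * Gm * s^3 / 6 + (1/2) * (Le * norm v * s^2 / 2)"
        using Db[OF sh] psib[OF sh] unfolding I_def by (intro add_mono mult_left_mono) auto
      finally show "norm (p s - (1/2) *\<^sub>R (v + (v - I s)) + (s/2) *\<^sub>R g s) \<le> Le * Gm * s^3 / 6 + Le * norm v * s^2 / 4"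
        unfolding eq by simp
    qed
    then show ?thesis by (simp add: E_def q0)
  qed
  have DhA: "D h = p h - A" by (simp add: D_def A_def g_def)
  have EhA: "E h = q h - (x + (h/2) *\<^sub>R (v + A))" by (simp add: E_def I_def A_def g_def algebra_simps)
  define a where "a = Le * h^2"
  define S where "S = M + Bc / Le"
  have a0: "a > 0" using Le h by (simp add: a_def)
  have GmS: "Gm = Le * S" using Le by (simp add: Gm_def S_def field_simps)
  have M0: "M \<ge> 0" by (simp add: M_def)
  have S0: "S \<ge> 0" using M0 Bc Le by (simp add: S_def)
  have hS: "S \<le> norm x + h * norm v + Bc / Le + a * S / 2"
  proof -
    have "h^2/2 * Gm = a * S / 2" by (simp add: GmS a_def)
    then show ?thesis using Mb unfolding S_def by linarith
  qed
  have hP: "norm (p h - A)^2 / Le \<le> a^3 * S^2 / 36"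
  proof -
    have "norm (D h)^2 \<le> (Le * Gm * h^3 / 6)^2"
      using Db[of h] h by (intro power_mono) auto
    then have "norm (D h)^2 / Le \<le> (Le * Gm * h^3 / 6)^2 / Le" using Le by (intro divide_right_mono) auto
    also have "(Le * Gm * h^3 / 6)^2 / Le = a^3 * S^2 / 36"
      using Le by (simp add: GmS a_def field_simps power2_eq_square power3_eq_cube)
    finally show ?thesis unfolding DhA .
  qed
  have he: "norm (q h - (x + (h/2) *\<^sub>R (v + A))) \<le> a^2 * S / 24 + a * (h * norm v) / 12"
  proof -
    have "Le * Gm * h^4 / 24 + Le * norm v * h^3 / 12 = a^2 * S / 24 + a * (h * norm v) / 12"
      by (simp add: GmS a_def field_simps power2_eq_square power3_eq_cube power4_eq_xxxx)
    then show ?thesis using Eb unfolding EhA by simp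
  qed
  have main: "norm (q h - (x + (h/2) *\<^sub>R (v + A)))^2 + norm (p h - A)^2 / Le
     \<le> 7 * (a^3 * norm x^2) + 7 * (a^2 * (h * norm v)^2) + 7 * (a^3 * (Bc / Le)^2) / 3"
    by (rule num_ineq[OF a0 _ _ _ _ S0 _ hP _ he]) (use step Bc Le h hS in \<open>auto simp: a_def\<close>)
  also have "\<dots> = 7 * (Le*h^2)^3 * (norm x^2 + norm v^2/Le + Bc^2/(3*Le^2))"
    using Le by (simp add: a_def field_simps power2_eq_square power3_eq_cube)
  finally show ?thesis .
qed


theorem mainTheorem14:
  fixes V :: "'d::euclidean_space \<Rightarrow> real"
    and gV :: "'d \<Rightarrow> 'd"
    and W :: "'d \<Rightarrow> 'd \<Rightarrow> real"
    and gW :: "'d \<Rightarrow> 'd \<Rightarrow> 'd"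
    and gU :: "'d ^ 'n::finite \<Rightarrow> 'd ^ 'n"
    and eps L Lt h :: real
    and x v :: "'d ^ 'n"
    and q p :: "real \<Rightarrow> 'd ^ 'n"
  assumes eps: "eps \<ge> 0"
    and L: "L > 0" and Lt: "Lt \<ge> 0"
    and V_diff: "\<And>y. (V has_derivative (\<lambda>z. gV y \<bullet> z)) (at y)"
    and V0: "V 0 = 0" and Vnn: "\<And>y. V y \<ge> 0"
    and V_lip: "\<And>y z. norm (gV y - gV z) \<le> L * norm (y - z)"
    and W_diff: "\<And>y z. ((\<lambda>a. W a z) has_derivative (\<lambda>b. gW y z \<bullet> b)) (at y)"
    and W_sym: "\<And>y z. W y z = W z y"
    and W_lip: "\<And>y z y' z'. norm (gW y z - gW y' z') \<le> Lt * (norm (y - y') + norm (z - z'))"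
    and U_grad: "\<And>y. (Upot V W eps has_derivative (\<lambda>z. gU y \<bullet> z)) (at y)"
    and h: "h > 0"
    and step: "(L + 2 * eps * Lt) * h^2 \<le> 1/9"
    and q0: "q 0 = x" and p0: "p 0 = v"
    and q_ode: "\<And>t. t \<in> {0..h} \<Longrightarrow> (q has_vector_derivative p t) (at t within {0..h})"
    and p_ode: "\<And>t. t \<in> {0..h} \<Longrightarrow> (p has_vector_derivative - gU (q t)) (at t within {0..h})"
  shows "(\<Sum>l\<in>UNIV.
            tnorm2 (L + 2 * eps * Lt)
              ((integral {0..1} (\<lambda>u. Qstep gU h x v u)) $ l - q h $ l)
              ((integral {0..1} (\<lambda>u. Pstep gU h x v u)) $ l - p h $ l))
         \<le> 7 * ((L + 2 * eps * Lt) * h^2)^3 *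
           (\<Sum>l\<in>UNIV. tnorm2 (L + 2 * eps * Lt) (x $ l) (v $ l)
              + 1/3 * (L + 2 * eps * Lt) powi (-2) * eps^2 * (norm (gW 0 0))^2)"
  proof -
  define Le where "Le = L + 2 * eps * Lt"
  define N where "N = real CARD('n)"
  define Bc where "Bc = eps * norm (gW 0 0) * sqrt N"
  have "0 \<le> 2 * eps * Lt" using eps Lt by simp
  then have Le0: "Le > 0" using L unfolding Le_def by linarith
  have N0: "N > 0" by (simp add: N_def)
  have Bc0: "Bc \<ge> 0" using eps N0 by (simp add: Bc_def)
  have gV0: "gV 0 = 0"
  proof -
    have "(\<lambda>z. gV 0 \<bullet> z) = (\<lambda>v. 0)"
      by (rule differential_zero_maxmin[of 0 UNIV V]) (use V_diff V0 Vnn in auto)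
    then have "gV 0 \<bullet> gV 0 = 0" by (metis (mono_tags))
    then show ?thesis by simp
  qed
  have gWc: "continuous_on UNIV (\<lambda>p. gW (fst p) (snd p))" by (rule gW_cont[OF W_lip Lt])
  have WJ: "\<And>a b. ((\<lambda>p. W (fst p) (snd p)) has_derivative (\<lambda>t. gW a b \<bullet> fst t + gW b a \<bullet> snd t)) (at (a,b))"
    by (rule W_joint[OF W_diff W_sym gWc])
  have gUF: "gU y = (\<chi> k. gV (y$k) + (eps / real CARD('n)) *\<^sub>R (\<Sum>j\<in>UNIV. gW (y$k) (y$j)))" for y
    by (rule gU_formula[OF V_diff WJ U_grad])
  have Glip: "norm (gU y - gU z) \<le> Le * norm (y - z)" for y z
    unfolding gUF Le_def by (rule F_lip[OF eps Lt _ V_lip W_lip]) (use L in simp)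
  have Ggr: "norm (gU y) \<le> Le * norm y + Bc" for y
    unfolding gUF Le_def Bc_def N_def by (rule F_growth[OF eps Lt _ gV0 V_lip W_lip]) (use L in simp)
  define A where "A = v - integral {0..h} (\<lambda>s. gU (x + s *\<^sub>R v))"
  have ode: "norm (q h - (x + (h/2) *\<^sub>R (v + A)))^2 + norm (p h - A)^2 / Le
         \<le> 7 * (Le*h^2)^3 * (norm x^2 + norm v^2/Le + Bc^2/(3*Le^2))"
    unfolding A_def
    by (rule ode_bound[OF Le0 Bc0 h _ Glip Ggr q0 p0 q_ode p_ode]) (use step in \<open>simp add: Le_def\<close>)
  define k where "k = (\<lambda>s. gU (x + s *\<^sub>R v))"
  have Gc: "continuous_on UNIV gU"
    by (rule lipschitz_on_continuous_on[of Le]) (use Le0 Glip in \<open>auto simp: lipschitz_on_def dist_norm\<close>)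
  have kc: "continuous_on {0..h} k"
    unfolding k_def by (intro continuous_on_compose2[OF Gc] continuous_intros) auto
  have hk: "(k has_integral integral {0..h} k) {0..h}"
    using integrable_continuous_real[OF kc] by (rule integrable_integral)
  have img: "(\<lambda>s. s / h) ` {0..h} = {0..1}"
  proof
    show "(\<lambda>s. s / h) ` {0..h} \<subseteq> {0..1}" using h by auto
    show "{0..1} \<subseteq> (\<lambda>s. s / h) ` {0..h}"
    proof
      fix y :: real assume y: "y \<in> {0..1}"
      then have "h * y \<in> {0..h}" "y = (h * y) / h" using h by (auto simp: mult_le_cancel_left1)
      then show "y \<in> (\<lambda>s. s / h) ` {0..h}" by (rule rev_image_eqI)
    qed
  qed
  have hs: "((\<lambda>u. k (h * u)) has_integral (1 / h) *\<^sub>R integral {0..h} k) {0..1}"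
    using has_integral_stretch_real[OF hk, of h] h img by simp
  have intP: "integral {0..1} (\<lambda>u. Pstep gU h x v u) = A"
  proof -
    have c: "((\<lambda>u. v) has_integral v) {0..1::real}" using has_integral_const_real[of v 0 1] by simp
    have "((\<lambda>u. v - h *\<^sub>R k (h * u)) has_integral (v - h *\<^sub>R ((1 / h) *\<^sub>R integral {0..h} k))) {0..1}"
      by (intro has_integral_diff c has_integral_cmul hs)
    then have "((\<lambda>u. Pstep gU h x v u) has_integral A) {0..1}"
      using h by (simp add: Pstep_def k_def A_def)
    then show ?thesis by (rule integral_unique)
  qed
  have intQ: "integral {0..1} (\<lambda>u. Qstep gU h x v u) = x + (h/2) *\<^sub>R (v + A)"
  proof -
    have c: "((\<lambda>u. x + h *\<^sub>R v) has_integral (x + h *\<^sub>R v)) {0..1::real}" using has_integral_const_real[of "x + h *\<^sub>R v" 0 1] by simp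
    have i1: "((\<lambda>u. (x + h *\<^sub>R v) - (h^2/2) *\<^sub>R k (h * u)) has_integral ((x + h *\<^sub>R v) - (h^2/2) *\<^sub>R ((1 / h) *\<^sub>R integral {0..h} k))) {0..1}"
      by (intro has_integral_diff c has_integral_cmul hs)
    have e1: "(x + h *\<^sub>R v) - (h^2/2) *\<^sub>R ((1 / h) *\<^sub>R integral {0..h} k) = x + (h/2) *\<^sub>R (v + A)"
      using h by (simp add: A_def k_def algebra_simps power2_eq_square half_half half_half2)
    have "((\<lambda>u. Qstep gU h x v u) has_integral ((x + h *\<^sub>R v) - (h^2/2) *\<^sub>R ((1 / h) *\<^sub>R integral {0..h} k))) {0..1}"
      using i1 by (simp only: Qstep_def k_def)
    then have "((\<lambda>u. Qstep gU h x v u) has_integral (x + (h/2) *\<^sub>R (v + A))) {0..1}"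
      unfolding e1 .
    then show ?thesis by (rule integral_unique)
  qed
  have nsq: "norm (w :: 'd ^ 'n)^2 = (\<Sum>l\<in>UNIV. norm (w$l)^2)" for w
    unfolding norm_vec_def L2_set_def by (simp add: sum_nonneg)
  have LHS: "(\<Sum>l\<in>UNIV. tnorm2 (L + 2 * eps * Lt)
              ((integral {0..1} (\<lambda>u. Qstep gU h x v u)) $ l - q h $ l)
              ((integral {0..1} (\<lambda>u. Pstep gU h x v u)) $ l - p h $ l))
        = norm (q h - (x + (h/2) *\<^sub>R (v + A)))^2 + norm (p h - A)^2 / Le"
    unfolding intP intQ tnorm2_def Le_def[symmetric]
    by (simp add: nsq sum.distrib sum_divide_distrib norm_minus_commute)
  have RHS: "7 * (Le*h^2)^3 * (norm x^2 + norm v^2/Le + Bc^2/(3*Le^2))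
       = 7 * ((L + 2 * eps * Lt) * h^2)^3 *
           (\<Sum>l\<in>UNIV. tnorm2 (L + 2 * eps * Lt) (x $ l) (v $ l)
              + 1/3 * (L + 2 * eps * Lt) powi (-2) * eps^2 * (norm (gW 0 0))^2)"
  proof -
    have "(\<Sum>l\<in>UNIV. tnorm2 Le (x $ l) (v $ l) + 1/3 * Le powi (-2) * eps^2 * (norm (gW 0 0))^2)
        = norm x^2 + norm v^2/Le + N * (1/3 * Le powi (-2) * eps^2 * (norm (gW 0 0))^2)"
      by (simp add: tnorm2_def nsq sum.distrib sum_divide_distrib N_def)
    also have "\<dots> = norm x^2 + norm v^2/Le + Bc^2/(3*Le^2)"
      using N0 Le0 by (simp add: Bc_def power_int_minus power_mult_distrib field_simps)
    finally show ?thesis unfolding Le_def by simp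
  qed
  show ?thesis unfolding LHS RHS[symmetric] by (rule ode)
qed

end
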